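(* Let $H$ be a dephased complex Hadamard matrix of order $6$ such that some row other than the first, or some column other than the first, consists entirely of cube roots of unity. Then either $H$ is equivalent to the matrix $S_6^{(0)}$, or $H$ belongs to the family $K_6^{(3)}$.
   Context: A complex Hadamard matrix of order $n$ is an $n\times n$ complex matrix with all entries of modulus $1$ satisfying $HH^\ast=nI_n$; it is dephased if its first row and column consist of $1$'s, and its core is its lower right $(n-1)\times(n-1)$ submatrix. $H$ and $K$ are equivalent if $K=P_1D_1HD_2P_2$ with $P_i$ permutation matrices and $D_i$ diagonal unitary matrices. A $6\times 6$ complex Hadamard matrix belongs to the family $K_6^{(3)}$ if it is equivalent to a dephased complex Hadamard matrix whose core contains an entry $-1$. With $\omega=e^{2\pi i/3}$, \[S_6^{(0)}=\begin{bmatrix}1&1&1&1&1&1\\1&1&\omega&\omega^2&\omega^2&\omega\\1&\omega&1&\omega&\omega^2&\omega^2\\1&\omega^2&\omega&1&\omega&\omega^2\\1&\omega^2&\omega^2&\omega&1&\omega\\1&\omega&\omega^2&\omega^2&\omega&1\end{bmatrix}.\] *)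

theory Defs
  imports "HOL-Analysis.Analysis"
begin

text \<open>Square complex matrices of order n are modelled as complex^'n^'n; order 6 uses the
numeral type 6. The first row/column is index 1 of type 6.\<close>

definition conj_transpose :: "complex^'n^'n \<Rightarrow> complex^'n^'n" where
  "conj_transpose A = (\<chi> i j. cnj (A $ j $ i))"

definition complex_hadamard :: "complex^'n^'n \<Rightarrow> bool" where
  "complex_hadamard H \<longleftrightarrow> (\<forall>i j. cmod (H $ i $ j) = 1) \<and>
     H ** conj_transpose H = of_nat CARD('n) *\<^sub>R mat 1"

definition dephased :: "complex^('n::{finite,one})^('n::{finite,one}) \<Rightarrow> bool" where
  "dephased H \<longleftrightarrow> (\<forall>j. H $ 1 $ j = 1) \<and> (\<forall>i. H $ i $ 1 = 1)"

definition perm_matrix :: "('n::finite \<Rightarrow> 'n) \<Rightarrow> complex^'n^'n" where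
  "perm_matrix p = (\<chi> i j. if p i = j then 1 else 0)"

definition diag_matrix :: "('n::finite \<Rightarrow> complex) \<Rightarrow> complex^'n^'n" where
  "diag_matrix d = (\<chi> i j. if i = j then d i else 0)"

definition hadamard_equiv :: "complex^'n::finite^'n \<Rightarrow> complex^'n^'n \<Rightarrow> bool" where
  "hadamard_equiv H K \<longleftrightarrow> (\<exists>p1 p2 d1 d2. p1 permutes UNIV \<and> p2 permutes UNIV \<and>
     (\<forall>i. cmod (d1 i) = 1) \<and> (\<forall>i. cmod (d2 i) = 1) \<and>
     K = perm_matrix p1 ** diag_matrix d1 ** H ** diag_matrix d2 ** perm_matrix p2)"

text \<open>Family K_6^(3): equivalent to a dephased complex Hadamard matrix whose core
(the lower-right 5x5 submatrix) contains an entry -1.\<close>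
definition in_K6_3 :: "complex^6^6 \<Rightarrow> bool" where
  "in_K6_3 H \<longleftrightarrow> (\<exists>K. complex_hadamard K \<and> dephased K \<and> hadamard_equiv H K \<and>
      (\<exists>i j. i \<noteq> 1 \<and> j \<noteq> 1 \<and> K $ i $ j = -1))"

definition omega3 :: complex where
  "omega3 = cis (2 * pi / 3)"

definition S6_0_list :: "nat list list" where
  "S6_0_list = [[0,0,0,0,0,0],[0,0,1,2,2,1],[0,1,0,1,2,2],[0,2,1,0,1,2],[0,2,2,1,0,1],[0,1,2,2,1,0]]"

text \<open>Entry (i,j) (0-based) of S_6^(0) is omega^(S6_0_list!i!j). Index k::6 corresponds
to the unique row number n < 6 with n + 1 = k in type 6, so index 1 is the first row.\<close>
definition idx6 :: "6 \<Rightarrow> nat" where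
  "idx6 k = (THE n. n < 6 \<and> (of_nat n + 1 :: 6) = k)"

definition S6_0 :: "complex^6^6" where
  "S6_0 = (\<chi> i j. omega3 ^ (S6_0_list ! idx6 i ! idx6 j))"

end

theory Submission
  imports Defs
begin

lemma UNIV6: "(UNIV::6 set) = {0,1,2,3,4,5}"
proof -
  have "card {0,1,2,3,4,5::6} = 6" by simp
  then show ?thesis by (intro card_subset_eq[symmetric]) auto
qed
lemma all6: "(\<forall>x::6. P x) \<longleftrightarrow> P 0 \<and> P 1 \<and> P 2 \<and> P 3 \<and> P 4 \<and> P 5"
proof -
  have "(\<forall>x::6. P x) \<longleftrightarrow> (\<forall>x\<in>UNIV. P x)" by simp
  also have "\<dots> \<longleftrightarrow> (\<forall>x\<in>{0,1,2,3,4,5}. P x)" by (simp only: UNIV6)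
  finally show ?thesis by simp
qed
lemma ex6: "(\<exists>x::6. P x) \<longleftrightarrow> P 0 \<or> P 1 \<or> P 2 \<or> P 3 \<or> P 4 \<or> P 5"
proof -
  have "(\<exists>x::6. P x) \<longleftrightarrow> \<not>(\<forall>x. \<not> P x)" by blast
  also have "\<dots> \<longleftrightarrow> \<not>(\<not> P 0 \<and> \<not> P 1 \<and> \<not> P 2 \<and> \<not> P 3 \<and> \<not> P 4 \<and> \<not> P 5)" by (simp only: all6)
  finally show ?thesis by blast
qed
lemma sum6: "(\<Sum>x::6\<in>UNIV. f x) = f 0 + f 1 + f 2 + f 3 + f 4 + f 5"
proof -
  have "(\<Sum>x::6\<in>UNIV. f x) = (\<Sum>x\<in>{0,1,2,3,4,5}. f x)" by (simp only: UNIV6)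
  also have "\<dots> = f 0 + f 1 + f 2 + f 3 + f 4 + f 5" by (simp add: add.assoc)
  finally show ?thesis .
qed
lemma lt6: "(n::nat) < 6 \<longleftrightarrow> n = 0 \<or> n = 1 \<or> n = 2 \<or> n = 3 \<or> n = 4 \<or> n = 5" by auto
lemma idx6_ind: assumes "n < 6" shows "idx6 (of_nat n + 1) = n"
  unfolding idx6_def
proof (rule the_equality)
  fix m assume a: "m < 6 \<and> (of_nat m + 1 :: 6) = of_nat n + 1"
  have "m = 0 \<or> m = 1 \<or> m = 2 \<or> m = 3 \<or> m = 4 \<or> m = 5" using a by linarith
  moreover have "n = 0 \<or> n = 1 \<or> n = 2 \<or> n = 3 \<or> n = 4 \<or> n = 5" using assms by linarith
  ultimately show "m = n" using a by (elim disjE) simp_all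
qed (use assms in simp)
lemma six6: "(6::6) = 0" by simp
lemma idx6: "idx6 1 = 0" "idx6 2 = 1" "idx6 3 = 2" "idx6 4 = 3" "idx6 5 = 4" "idx6 0 = 5"
  using idx6_ind[of 0] idx6_ind[of 1] idx6_ind[of 2] idx6_ind[of 3] idx6_ind[of 4] idx6_ind[of 5] by (simp_all add: six6)
lemma ind_idx6: "of_nat (idx6 k) + 1 = k" "idx6 k < 6"
  using all6[of "\<lambda>k. of_nat (idx6 k) + 1 = k \<and> idx6 k < 6"] by (auto simp: idx6)

lemma perm_left: "(perm_matrix p ** A) $ i $ j = A $ (p i) $ j"
  by (simp add: matrix_matrix_mult_def perm_matrix_def if_distrib[of "\<lambda>x. x * y" for y] cong: if_cong)
lemma diag_left: "(diag_matrix d ** A) $ i $ j = d i * A $ i $ j"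
  by (simp add: matrix_matrix_mult_def diag_matrix_def if_distrib[of "\<lambda>x. x * y" for y] cong: if_cong)
lemma pd_left: "(perm_matrix p ** diag_matrix d ** A) $ i $ j = d (p i) * A $ (p i) $ j"
  by (simp add: matrix_mul_assoc[symmetric] perm_left diag_left)
lemma diag_right: "(A ** diag_matrix d) $ i $ j = A $ i $ j * d j"
  by (simp add: matrix_matrix_mult_def diag_matrix_def if_distrib cong: if_cong)
lemma perm_right: assumes "bij p" shows "(A ** perm_matrix p) $ i $ j = A $ i $ (inv p j)"
proof -
  have e: "\<And>k. (p k = j) = (k = inv p j)" using assms by (metis bij_inv_eq_iff)
  show ?thesis
    by (simp add: matrix_matrix_mult_def perm_matrix_def e if_distrib cong: if_cong)
qed

definition eqv :: "complex^'n::finite^'n \<Rightarrow> complex^'n^'n \<Rightarrow> bool" where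
  "eqv H K \<longleftrightarrow> (\<exists>\<sigma> \<tau> a b. bij \<sigma> \<and> bij \<tau> \<and> (\<forall>i. cmod (a i) = 1) \<and> (\<forall>j. cmod (b j) = 1) \<and>
     (\<forall>i j. K $ i $ j = a i * H $ (\<sigma> i) $ (\<tau> j) * b j))"

lemma eqv_hadamard_equiv: assumes "eqv H K" shows "hadamard_equiv H K"
proof -
  obtain \<sigma> \<tau> a b where s: "bij \<sigma>" and t: "bij \<tau>" and a: "\<forall>i. cmod (a i) = 1" and b: "\<forall>j. cmod (b j) = 1"
    and K: "\<forall>i j. K $ i $ j = a i * H $ (\<sigma> i) $ (\<tau> j) * b j"
    using assms unfolding eqv_def by blast
  have ti: "bij (inv \<tau>)" using t by (simp add: bij_imp_bij_inv)
  have iit: "inv (inv \<tau>) = \<tau>" using t by (simp add: inv_inv_eq)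
  have "K = perm_matrix \<sigma> ** diag_matrix (a \<circ> inv \<sigma>) ** H ** diag_matrix (b \<circ> inv \<tau>) ** perm_matrix (inv \<tau>)"
  proof (simp add: vec_eq_iff, intro allI)
    fix i j
    show "K $ i $ j = (perm_matrix \<sigma> ** diag_matrix (a \<circ> inv \<sigma>) ** H ** diag_matrix (b \<circ> inv \<tau>) ** perm_matrix (inv \<tau>)) $ i $ j"
      using s t K by (simp add: perm_right[OF ti] iit diag_right pd_left bij_is_inj bij_is_surj surj_f_inv_f)
  qed
  moreover have "\<sigma> permutes UNIV" "inv \<tau> permutes UNIV" using s ti by (auto intro: bij_imp_permutes)
  moreover have "\<forall>i. cmod ((a \<circ> inv \<sigma>) i) = 1" "\<forall>i. cmod ((b \<circ> inv \<tau>) i) = 1" using a b by auto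
  ultimately show ?thesis unfolding hadamard_equiv_def by blast
qed

lemma eqv_refl: "eqv H H"
  unfolding eqv_def by (rule exI[of _ id], rule exI[of _ id], rule exI[of _ "\<lambda>_. 1"], rule exI[of _ "\<lambda>_. 1"]) simp

lemma eqv_trans: assumes "eqv H K" "eqv K L" shows "eqv H L"
proof -
  obtain \<sigma> \<tau> a b where s: "bij \<sigma>" and t: "bij \<tau>" and a: "\<forall>i. cmod (a i) = 1" and b: "\<forall>j. cmod (b j) = 1"
    and K: "\<forall>i j. K $ i $ j = a i * H $ (\<sigma> i) $ (\<tau> j) * b j"
    using assms(1) unfolding eqv_def by blast
  obtain \<sigma>' \<tau>' a' b' where s': "bij \<sigma>'" and t': "bij \<tau>'" and a': "\<forall>i. cmod (a' i) = 1" and b': "\<forall>j. cmod (b' j) = 1"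
    and L: "\<forall>i j. L $ i $ j = a' i * K $ (\<sigma>' i) $ (\<tau>' j) * b' j"
    using assms(2) unfolding eqv_def by blast
  show ?thesis unfolding eqv_def
    apply (rule exI[of _ "\<sigma> \<circ> \<sigma>'"], rule exI[of _ "\<tau> \<circ> \<tau>'"], rule exI[of _ "\<lambda>i. a' i * a (\<sigma>' i)"], rule exI[of _ "\<lambda>j. b (\<tau>' j) * b' j"])
    using s t s' t' a b a' b' K L by (auto simp: bij_comp norm_mult mult_ac)
qed

lemma eqv_sym: assumes "eqv H K" shows "eqv K H"
proof -
  obtain \<sigma> \<tau> a b where s: "bij \<sigma>" and t: "bij \<tau>" and a: "\<forall>i. cmod (a i) = 1" and b: "\<forall>j. cmod (b j) = 1"
    and K: "\<forall>i j. K $ i $ j = a i * H $ (\<sigma> i) $ (\<tau> j) * b j"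
    using assms(1) unfolding eqv_def by blast
  have "\<forall>i j. H $ i $ j = inverse (a (inv \<sigma> i)) * K $ (inv \<sigma> i) $ (inv \<tau> j) * inverse (b (inv \<tau> j))"
  proof (intro allI)
    fix i j
    have "a (inv \<sigma> i) \<noteq> 0" "b (inv \<tau> j) \<noteq> 0" using a b by (metis norm_zero zero_neq_one)+
    then show "H $ i $ j = inverse (a (inv \<sigma> i)) * K $ (inv \<sigma> i) $ (inv \<tau> j) * inverse (b (inv \<tau> j))"
      using K s t by (simp add: bij_is_surj surj_f_inv_f field_simps)
  qed
  note HH = this
  have bb: "bij (inv \<sigma>)" "bij (inv \<tau>)" using s t by (simp_all add: bij_imp_bij_inv)
  have cc: "\<forall>i. cmod (inverse (a (inv \<sigma> i))) = 1" "\<forall>j. cmod (inverse (b (inv \<tau> j))) = 1"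
    using a b by (simp_all add: norm_inverse)
  show ?thesis unfolding eqv_def
    apply (rule exI[of _ "inv \<sigma>"], rule exI[of _ "inv \<tau>"], rule exI[of _ "\<lambda>i. inverse (a (inv \<sigma> i))"], rule exI[of _ "\<lambda>j. inverse (b (inv \<tau> j))"])
    using HH bb cc by blast
qed

lemma had_row: assumes "complex_hadamard (H::complex^6^6)"
  shows "(\<Sum>j\<in>UNIV. H$a$j * cnj (H$b$j)) = (if a = b then 6 else 0)"
proof -
  have "(H ** conj_transpose H) $ a $ b = (of_nat CARD(6) *\<^sub>R mat 1 :: complex^6^6) $ a $ b"
    using assms unfolding complex_hadamard_def by simp
  then show ?thesis by (simp add: matrix_matrix_mult_def conj_transpose_def mat_def scaleR_conv_of_real)
qed

lemma had_col: assumes "complex_hadamard (H::complex^6^6)"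
  shows "(\<Sum>k\<in>UNIV. H$k$a * cnj (H$k$b)) = (if a = b then 6 else 0)"
proof -
  define B where "B = (\<chi> i j. cnj (H$j$i) / (6::complex))"
  have "H ** B = mat 1"
  proof (simp add: vec_eq_iff, intro allI)
    fix i j
    have "(H ** B) $ i $ j = (\<Sum>k\<in>UNIV. H$i$k * cnj (H$j$k)) / 6"
      by (simp add: matrix_matrix_mult_def B_def sum_divide_distrib)
    also have "\<dots> = (if i = j then 1 else 0)" using had_row[OF assms] by simp
    finally show "(H ** B) $ i $ j = mat 1 $ i $ j" by (simp add: mat_def)
  qed
  then have "B ** H = mat 1" using matrix_left_right_inverse by blast
  then have "(B ** H) $ b $ a = mat 1 $ b $ a" by simp
  then have "(\<Sum>k\<in>UNIV. cnj (H$k$b) * H$k$a) / 6 = (if a = b then 1 else 0)"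
    by (simp add: matrix_matrix_mult_def B_def sum_divide_distrib mat_def)
  then show ?thesis by (auto simp: mult.commute split: if_splits)
qed

lemma had_unit: "complex_hadamard H \<Longrightarrow> cmod (H$i$j) = 1"
  unfolding complex_hadamard_def by blast

lemma had_intro: assumes "\<And>i j. cmod ((H::complex^6^6)$i$j) = 1"
   "\<And>a b. (\<Sum>j\<in>UNIV. H$a$j * cnj (H$b$j)) = (if a = b then 6 else 0)"
  shows "complex_hadamard H"
  unfolding complex_hadamard_def
proof (intro conjI allI)
  show "H ** conj_transpose H = of_nat CARD(6) *\<^sub>R mat 1"
    using assms(2) by (simp add: vec_eq_iff matrix_matrix_mult_def conj_transpose_def mat_def scaleR_conv_of_real)
qed (use assms in auto)

abbreviation "\<omega> \<equiv> omega3"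
lemma omega_val: "\<omega> = Complex (-1/2) (sqrt 3 / 2)"
proof -
  have "sin (2 * pi / 3) = sqrt 3 / 2" using sin_120' by (simp add: mult.commute)
  then show ?thesis unfolding omega3_def cis.ctr using cos_120 by simp
qed
lemma omega2_val: "\<omega>^2 = Complex (-1/2) (- sqrt 3 / 2)"
proof -
  have "\<omega>^2 = \<omega> * \<omega>" by (simp add: power2_eq_square)
  also have "\<dots> = Complex (-1/2) (- sqrt 3 / 2)" unfolding omega_val by (simp add: complex_eq_iff)
  finally show ?thesis .
qed
lemma omega3: "\<omega>^3 = 1"
proof -
  have "\<omega>^3 = \<omega> * \<omega>^2" by (simp add: power3_eq_cube power2_eq_square)
  also have "\<dots> = 1" unfolding omega2_val by (simp add: omega_val complex_eq_iff)
  finally show ?thesis .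
qed
lemma omega_sum: "1 + \<omega> + \<omega>^2 = 0"
  unfolding omega2_val by (simp add: omega_val complex_eq_iff)
lemma omega_ne1: "\<omega> \<noteq> 1" "\<omega>^2 \<noteq> 1" "\<omega> \<noteq> \<omega>^2"
  unfolding omega2_val by (simp_all add: omega_val complex_eq_iff)
lemma cnj_omega: "cnj \<omega> = \<omega>^2" "cnj (\<omega>^2) = \<omega>"
  unfolding omega2_val by (simp_all add: omega_val complex_eq_iff)
lemma cmod_omega: "cmod \<omega> = 1" "cmod (\<omega>^2) = 1"
  unfolding omega3_def by (simp_all add: norm_power)
lemma omega4: "\<omega>^4 = \<omega>" "\<omega> * \<omega> = \<omega>^2" "\<omega> * \<omega>^2 = 1" "\<omega>^2 * \<omega>^2 = \<omega>"
  using omega3 by (simp_all add: power2_eq_square power3_eq_cube power4_eq_xxxx mult.assoc)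
lemma cube_root: assumes "(z::complex)^3 = 1" shows "z = 1 \<or> z = \<omega> \<or> z = \<omega>^2"
proof -
  have "(z - 1) * (z - \<omega>) * (z - \<omega>^2) = z^3 - (1 + \<omega> + \<omega>^2) * z^2 + \<omega> * (1 + \<omega> + \<omega>^2) * z - \<omega>^3"
    by (simp add: algebra_simps power2_eq_square power3_eq_cube)
  also have "\<dots> = 0" using assms omega3 omega_sum by simp
  finally show ?thesis by auto
qed

lemma unit_cnj: "cmod (a::complex) = 1 \<Longrightarrow> cnj a * a = 1"
  by (metis complex_norm_square mult.commute of_real_1 power_one)

lemma pair_lemma: assumes "cmod a = 1" "cmod b = 1" "cmod c = 1" "cmod d = 1" "a + b = c + d" "a + b \<noteq> 0"
  shows "(a = c \<and> b = d) \<or> (a = d \<and> b = c)"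
proof -
  have k: "\<And>x y. cmod x = 1 \<Longrightarrow> cmod y = 1 \<Longrightarrow> x * y * cnj (x + y) = x + y"
  proof -
    fix x y :: complex assume "cmod x = 1" "cmod y = 1"
    then have "cnj x * x = 1" "cnj y * y = 1" by (simp_all add: unit_cnj)
    then show "x * y * cnj (x + y) = x + y"
      by (simp add: algebra_simps)
  qed
  have "a * b * cnj (a + b) = c * d * cnj (a + b)" using k[OF assms(1,2)] k[OF assms(3,4)] assms(5) by simp
  moreover have "cnj (a + b) \<noteq> 0" using assms(6) complex_cnj_zero_iff by metis
  ultimately have p: "a * b = c * d" by simp
  have "(c - a) * (c - b) = c * c - c * (a + b) + a * b" by (simp add: algebra_simps)
  also have "\<dots> = 0" using p assms(5) by (simp add: algebra_simps)
  finally have "c = a \<or> c = b" by auto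
  then show ?thesis using assms(5) by auto
qed

lemma pair_m1: assumes "cmod u = 1" "cmod v = 1" "u + v = -1" shows "u = \<omega> \<or> u = \<omega>^2"
proof -
  have "\<omega> + \<omega>^2 = -1" using omega_sum by (simp add: algebra_simps eq_neg_iff_add_eq_0)
  then show ?thesis using pair_lemma[OF assms(1,2) cmod_omega(1) cmod_omega(2)] assms(3) by auto
qed


definition opts :: "nat list list" where "opts = [[0,1,2,0,1,2],[0,1,2,0,2,1],[0,1,0,2,1,2],[0,1,0,2,2,1],[0,2,2,1,1,0],[0,2,2,1,0,1],[0,2,1,2,1,0],[0,2,1,2,0,1]]"
definition R0 :: "nat list" where "R0 = [0,0,0,0,0,0]"
definition R1 :: "nat list" where "R1 = [0,0,1,1,2,2]"
definition cnt :: "nat \<Rightarrow> nat list \<Rightarrow> nat" where "cnt e d = length (filter (\<lambda>x. x = e) d)"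
definition dif :: "nat list \<Rightarrow> nat list \<Rightarrow> nat list" where
  "dif r s = map (\<lambda>j. (r!j + 2 * s!j) mod 3) [0..<6]"
definition bal :: "nat list \<Rightarrow> nat list \<Rightarrow> bool" where
  "bal r s = (cnt 0 (dif r s) = cnt 1 (dif r s) \<and> cnt 1 (dif r s) = cnt 2 (dif r s))"
definition WT :: "((nat \<times> nat \<times> nat \<times> nat) \<times> (nat list \<times> nat list \<times> nat list \<times> nat list)) list" where
 "WT = [((0,3,5,6), ([0,1,3,5,4,2], [0,1,2,5,4,3], [0,0,0,0,0,0], [0,0,0,0,0,0])),
  ((0,3,6,5), ([0,1,3,4,5,2], [0,1,2,5,4,3], [0,0,0,0,0,0], [0,0,0,0,0,0])),
  ((0,5,3,6), ([0,1,4,5,3,2], [0,1,2,5,4,3], [0,0,0,0,0,0], [0,0,0,0,0,0])),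
  ((0,5,6,3), ([0,1,5,4,3,2], [0,1,2,5,4,3], [0,0,0,0,0,0], [0,0,0,0,0,0])),
  ((0,6,3,5), ([0,1,4,3,5,2], [0,1,2,5,4,3], [0,0,0,0,0,0], [0,0,0,0,0,0])),
  ((0,6,5,3), ([0,1,5,3,4,2], [0,1,2,5,4,3], [0,0,0,0,0,0], [0,0,0,0,0,0])),
  ((1,2,4,7), ([0,1,3,5,4,2], [0,1,2,4,5,3], [0,0,0,0,0,0], [0,0,0,0,0,0])),
  ((1,2,7,4), ([0,1,3,4,5,2], [0,1,2,4,5,3], [0,0,0,0,0,0], [0,0,0,0,0,0])),
  ((1,4,2,7), ([0,1,4,5,3,2], [0,1,2,4,5,3], [0,0,0,0,0,0], [0,0,0,0,0,0])),
  ((1,4,7,2), ([0,1,5,4,3,2], [0,1,2,4,5,3], [0,0,0,0,0,0], [0,0,0,0,0,0])),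
  ((1,7,2,4), ([0,1,4,3,5,2], [0,1,2,4,5,3], [0,0,0,0,0,0], [0,0,0,0,0,0])),
  ((1,7,4,2), ([0,1,5,3,4,2], [0,1,2,4,5,3], [0,0,0,0,0,0], [0,0,0,0,0,0])),
  ((2,1,4,7), ([0,1,2,5,4,3], [0,1,2,4,5,3], [0,0,0,0,0,0], [0,0,0,0,0,0])),
  ((2,1,7,4), ([0,1,2,4,5,3], [0,1,2,4,5,3], [0,0,0,0,0,0], [0,0,0,0,0,0])),
  ((2,4,1,7), ([0,1,2,5,3,4], [0,1,2,4,5,3], [0,0,0,0,0,0], [0,0,0,0,0,0])),
  ((2,4,7,1), ([0,1,2,4,3,5], [0,1,2,4,5,3], [0,0,0,0,0,0], [0,0,0,0,0,0])),
  ((2,7,1,4), ([0,1,2,3,5,4], [0,1,2,4,5,3], [0,0,0,0,0,0], [0,0,0,0,0,0])),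
  ((2,7,4,1), ([0,1,2,3,4,5], [0,1,2,4,5,3], [0,0,0,0,0,0], [0,0,0,0,0,0])),
  ((3,0,5,6), ([0,1,2,5,4,3], [0,1,2,5,4,3], [0,0,0,0,0,0], [0,0,0,0,0,0])),
  ((3,0,6,5), ([0,1,2,4,5,3], [0,1,2,5,4,3], [0,0,0,0,0,0], [0,0,0,0,0,0])),
  ((3,5,0,6), ([0,1,2,5,3,4], [0,1,2,5,4,3], [0,0,0,0,0,0], [0,0,0,0,0,0])),
  ((3,5,6,0), ([0,1,2,4,3,5], [0,1,2,5,4,3], [0,0,0,0,0,0], [0,0,0,0,0,0])),
  ((3,6,0,5), ([0,1,2,3,5,4], [0,1,2,5,4,3], [0,0,0,0,0,0], [0,0,0,0,0,0])),
  ((3,6,5,0), ([0,1,2,3,4,5], [0,1,2,5,4,3], [0,0,0,0,0,0], [0,0,0,0,0,0])),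
  ((4,1,2,7), ([0,1,4,5,2,3], [0,1,2,4,5,3], [0,0,0,0,0,0], [0,0,0,0,0,0])),
  ((4,1,7,2), ([0,1,5,4,2,3], [0,1,2,4,5,3], [0,0,0,0,0,0], [0,0,0,0,0,0])),
  ((4,2,1,7), ([0,1,3,5,2,4], [0,1,2,4,5,3], [0,0,0,0,0,0], [0,0,0,0,0,0])),
  ((4,2,7,1), ([0,1,3,4,2,5], [0,1,2,4,5,3], [0,0,0,0,0,0], [0,0,0,0,0,0])),
  ((4,7,1,2), ([0,1,5,3,2,4], [0,1,2,4,5,3], [0,0,0,0,0,0], [0,0,0,0,0,0])),
  ((4,7,2,1), ([0,1,4,3,2,5], [0,1,2,4,5,3], [0,0,0,0,0,0], [0,0,0,0,0,0])),
  ((5,0,3,6), ([0,1,4,5,2,3], [0,1,2,5,4,3], [0,0,0,0,0,0], [0,0,0,0,0,0])),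
  ((5,0,6,3), ([0,1,5,4,2,3], [0,1,2,5,4,3], [0,0,0,0,0,0], [0,0,0,0,0,0])),
  ((5,3,0,6), ([0,1,3,5,2,4], [0,1,2,5,4,3], [0,0,0,0,0,0], [0,0,0,0,0,0])),
  ((5,3,6,0), ([0,1,3,4,2,5], [0,1,2,5,4,3], [0,0,0,0,0,0], [0,0,0,0,0,0])),
  ((5,6,0,3), ([0,1,5,3,2,4], [0,1,2,5,4,3], [0,0,0,0,0,0], [0,0,0,0,0,0])),
  ((5,6,3,0), ([0,1,4,3,2,5], [0,1,2,5,4,3], [0,0,0,0,0,0], [0,0,0,0,0,0])),
  ((6,0,3,5), ([0,1,4,2,5,3], [0,1,2,5,4,3], [0,0,0,0,0,0], [0,0,0,0,0,0])),
  ((6,0,5,3), ([0,1,5,2,4,3], [0,1,2,5,4,3], [0,0,0,0,0,0], [0,0,0,0,0,0])),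
  ((6,3,0,5), ([0,1,3,2,5,4], [0,1,2,5,4,3], [0,0,0,0,0,0], [0,0,0,0,0,0])),
  ((6,3,5,0), ([0,1,3,2,4,5], [0,1,2,5,4,3], [0,0,0,0,0,0], [0,0,0,0,0,0])),
  ((6,5,0,3), ([0,1,5,2,3,4], [0,1,2,5,4,3], [0,0,0,0,0,0], [0,0,0,0,0,0])),
  ((6,5,3,0), ([0,1,4,2,3,5], [0,1,2,5,4,3], [0,0,0,0,0,0], [0,0,0,0,0,0])),
  ((7,1,2,4), ([0,1,4,2,5,3], [0,1,2,4,5,3], [0,0,0,0,0,0], [0,0,0,0,0,0])),
  ((7,1,4,2), ([0,1,5,2,4,3], [0,1,2,4,5,3], [0,0,0,0,0,0], [0,0,0,0,0,0])),
  ((7,2,1,4), ([0,1,3,2,5,4], [0,1,2,4,5,3], [0,0,0,0,0,0], [0,0,0,0,0,0])),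
  ((7,2,4,1), ([0,1,3,2,4,5], [0,1,2,4,5,3], [0,0,0,0,0,0], [0,0,0,0,0,0])),
  ((7,4,1,2), ([0,1,5,2,3,4], [0,1,2,4,5,3], [0,0,0,0,0,0], [0,0,0,0,0,0])),
  ((7,4,2,1), ([0,1,4,2,3,5], [0,1,2,4,5,3], [0,0,0,0,0,0], [0,0,0,0,0,0]))]"
definition wok :: "nat list list \<Rightarrow> nat list \<times> nat list \<times> nat list \<times> nat list \<Rightarrow> bool" where
  "wok M w = (case w of (sl, tl2, al, bl) \<Rightarrow> distinct sl \<and> length sl = 6 \<and> list_all (\<lambda>x. x < 6) sl \<and>
     distinct tl2 \<and> length tl2 = 6 \<and> list_all (\<lambda>x. x < 6) tl2 \<and> length al = 6 \<and> length bl = 6 \<and>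
     list_all (\<lambda>p. list_all (\<lambda>q. S6_0_list!p!q mod 3 = (al!p + M!(sl!p)!(tl2!q) + bl!q) mod 3) [0..<6]) [0..<6])"
definition BT :: "bool list list" where "BT = [[False,False,False,True,False,True,True,False],[False,False,True,False,True,False,False,True],[False,True,False,False,True,False,False,True],[True,False,False,False,False,True,True,False],[False,True,True,False,False,False,False,True],[True,False,False,True,False,False,True,False],[True,False,False,True,False,True,False,False],[False,True,True,False,True,False,False,False]]"
lemma baltab: "list_all (\<lambda>a. list_all (\<lambda>b. bal (opts!a) (opts!b) = BT!a!b) [0..<8]) [0..<8]"
  by (simp add: BT_def opts_def bal_def dif_def cnt_def upt_rec)
lemma opts_nth: "opts!0 = [0,1,2,0,1,2]" "opts!Suc 0 = [0,1,2,0,2,1]" "opts!1 = [0,1,2,0,2,1]" "opts!2 = [0,1,0,2,1,2]" "opts!3 = [0,1,0,2,2,1]" "opts!4 = [0,2,2,1,1,0]" "opts!5 = [0,2,2,1,0,1]" "opts!6 = [0,2,1,2,1,0]" "opts!7 = [0,2,1,2,0,1]"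
  by (simp_all add: opts_def)
lemma fin_wok: "list_all (\<lambda>((a,b,c,e),w). wok [R0,R1,opts!a,opts!b,opts!c,opts!e] w) WT"
  by (simp add: WT_def wok_def S6_0_list_def opts_nth R0_def R1_def upt_rec)
lemma fin_enum: "list_all (\<lambda>a. list_all (\<lambda>b. if BT!a!b then
   list_all (\<lambda>c. if BT!a!c \<and> BT!b!c then
   list_all (\<lambda>e. if BT!a!e \<and> BT!b!e \<and> BT!c!e then
     (a,b,c,e) \<in> set (map fst WT) else True) [0..<8] else True) [0..<8] else True) [0..<8]) [0..<8]"
  by (simp add: WT_def BT_def upt_rec)



lemma omega_mod: "\<omega>^n = \<omega>^(n mod 3)"
proof -
  have "\<omega>^n = \<omega>^(3 * (n div 3) + n mod 3)" by simp
  also have "\<dots> = (\<omega>^3)^(n div 3) * \<omega>^(n mod 3)" by (simp only: power_add power_mult)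
  finally show ?thesis using omega3 by simp
qed

lemma sum_omega_cnt: "\<forall>e\<in>set d. e < 3 \<Longrightarrow>
   sum_list (map (\<lambda>e. \<omega>^e) d) = of_nat (cnt 0 d) + of_nat (cnt 1 d) * \<omega> + of_nat (cnt 2 d) * \<omega>^2"
proof (induction d)
  case Nil then show ?case by (simp add: cnt_def)
next
  case (Cons e d)
  then have IH: "sum_list (map (\<lambda>e. \<omega>^e) d) = of_nat (cnt 0 d) + of_nat (cnt 1 d) * \<omega> + of_nat (cnt 2 d) * \<omega>^2"
    and e: "e = 0 \<or> e = 1 \<or> e = 2" by auto
  have c: "cnt k (x # d) = (if x = k then 1 else 0) + cnt k d" for k x by (simp add: cnt_def)
  show ?case using e by (elim disjE) (simp_all add: c IH algebra_simps)
qed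

lemma zero3: assumes "of_nat a + of_nat b * \<omega> + of_nat c * \<omega>^2 = (0::complex)" shows "a = b \<and> b = c"
proof -
  have "Re (of_nat a + of_nat b * \<omega> + of_nat c * \<omega>^2) = 0" "Im (of_nat a + of_nat b * \<omega> + of_nat c * \<omega>^2) = 0"
    using assms by simp_all
  then have r: "real a - real b / 2 - real c / 2 = 0" and i: "real b * (sqrt 3 / 2) - real c * (sqrt 3 / 2) = 0"
    unfolding omega2_val by (simp_all add: omega_val)
  have "(real b - real c) * (sqrt 3 / 2) = 0" using i by (simp add: algebra_simps)
  then have "real b = real c" by simp
  then show ?thesis using r by simp
qed

lemma omega_cnj_mult: "\<omega>^a * cnj (\<omega>^b) = \<omega>^((a + 2*b) mod 3)"
proof -
  have "cnj (\<omega>^b) = \<omega>^(2*b)" by (simp add: cnj_omega power_mult)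
  then have "\<omega>^a * cnj (\<omega>^b) = \<omega>^(a + 2*b)" by (simp add: power_add)
  then show ?thesis using omega_mod by metis
qed

lemma idx6_bij: "bij_betw idx6 UNIV {..<6}"
proof (rule bij_betw_imageI)
  show "inj idx6" by (metis injI ind_idx6(1))
  show "range idx6 = {..<6}"
  proof
    show "range idx6 \<subseteq> {..<6}" using ind_idx6(2) by auto
    show "{..<6} \<subseteq> range idx6" using idx6_ind by (metis image_iff lessThan_iff subsetI UNIV_I)
  qed
qed

lemma sum_idx6: "(\<Sum>j\<in>UNIV. g (idx6 j)) = sum_list (map g [0..<6])"
proof -
  have "(\<Sum>j\<in>UNIV. g (idx6 j)) = (\<Sum>p\<in>{..<6}. g p)" using sum.reindex_bij_betw[OF idx6_bij] by blast
  also have "\<dots> = sum_list (map g [0..<6])" by (simp add: sum_set_upt_conv_sum_list_nat[symmetric] atLeast0LessThan)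
  finally show ?thesis .
qed

lemma row_sum_list: assumes "\<forall>j. H$k$j = \<omega>^(r!idx6 j)" "\<forall>j. H$l$j = \<omega>^(s!idx6 j)"
  shows "(\<Sum>j\<in>UNIV. H$k$j * cnj (H$l$j)) = sum_list (map (\<lambda>e. \<omega>^e) (dif r s))"
proof -
  have "(\<Sum>j\<in>UNIV. H$k$j * cnj (H$l$j)) = (\<Sum>j\<in>UNIV. (\<lambda>p. \<omega>^((r ! p + 2 * s ! p) mod 3)) (idx6 j))"
    using assms omega_cnj_mult by (simp del: complex_cnj_power)
  also have "\<dots> = sum_list (map (\<lambda>p. \<omega>^((r ! p + 2 * s ! p) mod 3)) [0..<6])" by (rule sum_idx6)
  also have "\<dots> = sum_list (map (\<lambda>e. \<omega>^e) (dif r s))" by (simp add: dif_def comp_def)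
  finally show ?thesis .
qed

lemma orth_bal: assumes "complex_hadamard (H::complex^6^6)" "k \<noteq> l"
  "\<forall>j. H$k$j = \<omega>^(r!idx6 j)" "\<forall>j. H$l$j = \<omega>^(s!idx6 j)"
  shows "bal r s"
proof -
  have "sum_list (map (\<lambda>e. \<omega>^e) (dif r s)) = 0"
    using row_sum_list[OF assms(3,4)] had_row[OF assms(1), of k l] assms(2) by simp
  moreover have "\<forall>e\<in>set (dif r s). e < 3" by (auto simp: dif_def)
  ultimately show ?thesis using zero3 sum_omega_cnt unfolding bal_def by metis
qed

definition ind6 :: "nat \<Rightarrow> 6" where "ind6 p = of_nat p + 1"

lemma lall6: "list_all P [0..<6] \<Longrightarrow> p < 6 \<Longrightarrow> P p"
  by (simp add: list_all_iff)

lemma perm_list_bij: assumes "distinct sl" "length sl = 6" "list_all (\<lambda>x. x < 6) sl"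
  shows "bij (\<lambda>i. ind6 (sl ! idx6 i))" and "\<And>i. idx6 (ind6 (sl ! idx6 i)) = sl ! idx6 i"
proof -
  have lt: "\<And>i. sl ! idx6 i < 6" using assms(2,3) ind_idx6(2) by (simp add: list_all_length)
  show e: "\<And>i. idx6 (ind6 (sl ! idx6 i)) = sl ! idx6 i" unfolding ind6_def using lt idx6_ind by blast
  have "inj (\<lambda>i. ind6 (sl ! idx6 i))"
  proof (rule injI)
    fix i i' assume "ind6 (sl ! idx6 i) = ind6 (sl ! idx6 i')"
    then have "sl ! idx6 i = sl ! idx6 i'" using e by metis
    then have "idx6 i = idx6 i'" using assms(1,2) ind_idx6(2) nth_eq_iff_index_eq by metis
    then show "i = i'" using ind_idx6(1) by metis
  qed
  then show "bij (\<lambda>i. ind6 (sl ! idx6 i))" by (simp add: bij_def finite_UNIV_inj_surj)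
qed

lemma wok_eqv: assumes "wok M w" "\<forall>i j. H$i$j = \<omega>^(M!idx6 i!idx6 j)" shows "eqv H S6_0"
proof -
  obtain sl tl2 al bl where w: "w = (sl, tl2, al, bl)" by (cases w) auto
  have W: "distinct sl" "length sl = 6" "list_all (\<lambda>x. x < 6) sl"
     "distinct tl2" "length tl2 = 6" "list_all (\<lambda>x. x < 6) tl2"
     "list_all (\<lambda>p. list_all (\<lambda>q. S6_0_list!p!q mod 3 = (al!p + M!(sl!p)!(tl2!q) + bl!q) mod 3) [0..<6]) [0..<6]"
    using assms(1) unfolding w wok_def by auto
  note s = perm_list_bij[OF W(1-3)] and t = perm_list_bij[OF W(4-6)]
  have "\<forall>i j. S6_0 $ i $ j = \<omega>^(al ! idx6 i) * H $ (ind6 (sl ! idx6 i)) $ (ind6 (tl2 ! idx6 j)) * \<omega>^(bl ! idx6 j)"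
  proof (intro allI)
    fix i j
    have "S6_0_list!idx6 i!idx6 j mod 3 = (al!idx6 i + M!(sl!idx6 i)!(tl2!idx6 j) + bl!idx6 j) mod 3"
      using lall6[OF lall6[OF W(7) ind_idx6(2)] ind_idx6(2)] by simp
    then have "\<omega>^(S6_0_list!idx6 i!idx6 j) = \<omega>^(al!idx6 i + M!(sl!idx6 i)!(tl2!idx6 j) + bl!idx6 j)"
      by (metis omega_mod)
    then show "S6_0 $ i $ j = \<omega>^(al ! idx6 i) * H $ (ind6 (sl ! idx6 i)) $ (ind6 (tl2 ! idx6 j)) * \<omega>^(bl ! idx6 j)"
      using assms(2) s(2) t(2) by (simp add: S6_0_def power_add)
  qed
  then show ?thesis unfolding eqv_def
    apply (rule_tac exI[of _ "\<lambda>i. ind6 (sl ! idx6 i)"], rule_tac exI[of _ "\<lambda>j. ind6 (tl2 ! idx6 j)"])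
    apply (rule_tac exI[of _ "\<lambda>i. \<omega>^(al ! idx6 i)"], rule_tac exI[of _ "\<lambda>j. \<omega>^(bl ! idx6 j)"])
    using s(1) t(1) cmod_omega by (simp add: norm_power)
qed


lemma pair2: assumes "cmod u = 1" "cmod v = 1" "u + v = -1" shows "(u = \<omega> \<or> u = \<omega>^2) \<and> (v = \<omega> \<or> v = \<omega>^2)"
  using pair_m1[OF assms] pair_m1[OF assms(2,1)] assms(3) by (simp add: add.commute)

lemma notm2: "cmod (u::complex) = 1 \<Longrightarrow> u \<noteq> -2" by auto

lemma four: fixes x3 x4 x5 x0 c3 c4 c5 c0 :: complex
  assumes u: "cmod x3 = 1" "cmod x4 = 1" "cmod x5 = 1" "cmod x0 = 1"
    and s: "x3 + x4 + x5 + x0 = -2"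
    and c: "c3 = 1 \<or> c3 = x3" "c4 = 1 \<or> c4 = x4" "c5 = 1 \<or> c5 = x5" "c0 = 1 \<or> c0 = x0"
    and e: "c3 + c4 + c5 + c0 = 1"
  shows "(x3 = \<omega> \<or> x3 = \<omega>^2) \<and> (x4 = \<omega> \<or> x4 = \<omega>^2) \<and> (x5 = \<omega> \<or> x5 = \<omega>^2) \<and> (x0 = \<omega> \<or> x0 = \<omega>^2)"
proof -
  have h0: ?thesis if "c3 = 1" "c4 = 1" "c5 = 1" "c0 = 1"
    using that e by simp
  have h1: ?thesis if "c3 = 1" "c4 = 1" "c5 = 1" "c0 = x0"
  proof -
    have "x0 = -2" using that e by (simp add: algebra_simps eq_neg_iff_add_eq_0)
    then show ?thesis using notm2 u by blast
  qed
  have h2: ?thesis if "c3 = 1" "c4 = 1" "c5 = x5" "c0 = 1"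
  proof -
    have "x5 = -2" using that e by (simp add: algebra_simps eq_neg_iff_add_eq_0)
    then show ?thesis using notm2 u by blast
  qed
  have h3: ?thesis if "c3 = 1" "c4 = 1" "c5 = x5" "c0 = x0"
  proof -
    have 1: "x5 + x0 = -1" using that e by (simp add: algebra_simps eq_neg_iff_add_eq_0)
    have 2: "x3 + x4 = -1"
    proof -
      have "x3 + x4 = (x3 + x4 + x5 + x0) - (x5 + x0)" by (simp add: algebra_simps)
      also have "\<dots> = -2 - (-1)" by (subst s, subst 1, rule refl)
      finally show ?thesis by simp
    qed
    show ?thesis using pair2[OF u(3) u(4) 1] pair2[OF u(1) u(2) 2] by blast
  qed
  have h4: ?thesis if "c3 = 1" "c4 = x4" "c5 = 1" "c0 = 1"
  proof -
    have "x4 = -2" using that e by (simp add: algebra_simps eq_neg_iff_add_eq_0)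
    then show ?thesis using notm2 u by blast
  qed
  have h5: ?thesis if "c3 = 1" "c4 = x4" "c5 = 1" "c0 = x0"
  proof -
    have 1: "x4 + x0 = -1" using that e by (simp add: algebra_simps eq_neg_iff_add_eq_0)
    have 2: "x3 + x5 = -1"
    proof -
      have "x3 + x5 = (x3 + x4 + x5 + x0) - (x4 + x0)" by (simp add: algebra_simps)
      also have "\<dots> = -2 - (-1)" by (subst s, subst 1, rule refl)
      finally show ?thesis by simp
    qed
    show ?thesis using pair2[OF u(2) u(4) 1] pair2[OF u(1) u(3) 2] by blast
  qed
  have h6: ?thesis if "c3 = 1" "c4 = x4" "c5 = x5" "c0 = 1"
  proof -
    have 1: "x4 + x5 = -1" using that e by (simp add: algebra_simps eq_neg_iff_add_eq_0)
    have 2: "x3 + x0 = -1"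
    proof -
      have "x3 + x0 = (x3 + x4 + x5 + x0) - (x4 + x5)" by (simp add: algebra_simps)
      also have "\<dots> = -2 - (-1)" by (subst s, subst 1, rule refl)
      finally show ?thesis by simp
    qed
    show ?thesis using pair2[OF u(2) u(3) 1] pair2[OF u(1) u(4) 2] by blast
  qed
  have h7: ?thesis if "c3 = 1" "c4 = x4" "c5 = x5" "c0 = x0"
  proof -
    have o: "x4 + x5 + x0 = 0" using that e by (simp add: algebra_simps eq_neg_iff_add_eq_0)
    have "x3 = (x3 + x4 + x5 + x0) - (x4 + x5 + x0)" by (simp add: algebra_simps)
    then have "x3 = -2" using s o by simp
    then show ?thesis using notm2 u by blast
  qed
  have h8: ?thesis if "c3 = x3" "c4 = 1" "c5 = 1" "c0 = 1"
  proof -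
    have "x3 = -2" using that e by (simp add: algebra_simps eq_neg_iff_add_eq_0)
    then show ?thesis using notm2 u by blast
  qed
  have h9: ?thesis if "c3 = x3" "c4 = 1" "c5 = 1" "c0 = x0"
  proof -
    have 1: "x3 + x0 = -1" using that e by (simp add: algebra_simps eq_neg_iff_add_eq_0)
    have 2: "x4 + x5 = -1"
    proof -
      have "x4 + x5 = (x3 + x4 + x5 + x0) - (x3 + x0)" by (simp add: algebra_simps)
      also have "\<dots> = -2 - (-1)" by (subst s, subst 1, rule refl)
      finally show ?thesis by simp
    qed
    show ?thesis using pair2[OF u(1) u(4) 1] pair2[OF u(2) u(3) 2] by blast
  qed
  have h10: ?thesis if "c3 = x3" "c4 = 1" "c5 = x5" "c0 = 1"
  proof -
    have 1: "x3 + x5 = -1" using that e by (simp add: algebra_simps eq_neg_iff_add_eq_0)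
    have 2: "x4 + x0 = -1"
    proof -
      have "x4 + x0 = (x3 + x4 + x5 + x0) - (x3 + x5)" by (simp add: algebra_simps)
      also have "\<dots> = -2 - (-1)" by (subst s, subst 1, rule refl)
      finally show ?thesis by simp
    qed
    show ?thesis using pair2[OF u(1) u(3) 1] pair2[OF u(2) u(4) 2] by blast
  qed
  have h11: ?thesis if "c3 = x3" "c4 = 1" "c5 = x5" "c0 = x0"
  proof -
    have o: "x3 + x5 + x0 = 0" using that e by (simp add: algebra_simps eq_neg_iff_add_eq_0)
    have "x4 = (x3 + x4 + x5 + x0) - (x3 + x5 + x0)" by (simp add: algebra_simps)
    then have "x4 = -2" using s o by simp
    then show ?thesis using notm2 u by blast
  qed
  have h12: ?thesis if "c3 = x3" "c4 = x4" "c5 = 1" "c0 = 1"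
  proof -
    have 1: "x3 + x4 = -1" using that e by (simp add: algebra_simps eq_neg_iff_add_eq_0)
    have 2: "x5 + x0 = -1"
    proof -
      have "x5 + x0 = (x3 + x4 + x5 + x0) - (x3 + x4)" by (simp add: algebra_simps)
      also have "\<dots> = -2 - (-1)" by (subst s, subst 1, rule refl)
      finally show ?thesis by simp
    qed
    show ?thesis using pair2[OF u(1) u(2) 1] pair2[OF u(3) u(4) 2] by blast
  qed
  have h13: ?thesis if "c3 = x3" "c4 = x4" "c5 = 1" "c0 = x0"
  proof -
    have o: "x3 + x4 + x0 = 0" using that e by (simp add: algebra_simps eq_neg_iff_add_eq_0)
    have "x5 = (x3 + x4 + x5 + x0) - (x3 + x4 + x0)" by (simp add: algebra_simps)
    then have "x5 = -2" using s o by simp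
    then show ?thesis using notm2 u by blast
  qed
  have h14: ?thesis if "c3 = x3" "c4 = x4" "c5 = x5" "c0 = 1"
  proof -
    have o: "x3 + x4 + x5 = 0" using that e by (simp add: algebra_simps eq_neg_iff_add_eq_0)
    have "x0 = (x3 + x4 + x5 + x0) - (x3 + x4 + x5)" by (simp add: algebra_simps)
    then have "x0 = -2" using s o by simp
    then show ?thesis using notm2 u by blast
  qed
  have h15: ?thesis if "c3 = x3" "c4 = x4" "c5 = x5" "c0 = x0"
    using that e s by simp
  show ?thesis using c by (elim disjE) (rule h0 h1 h2 h3 h4 h5 h6 h7 h8 h9 h10 h11 h12 h13 h14 h15; assumption)+
qed


lemma dephased_entries: "dephased H \<Longrightarrow> H$1$j = 1 \<and> H$i$1 = 1"
  unfolding dephased_def by blast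

lemma row_struct:
  assumes h: "complex_hadamard (H::complex^6^6)" and d: "dephased H"
    and r2: "H$2$1 = 1" "H$2$2 = 1" "H$2$3 = \<omega>" "H$2$4 = \<omega>" "H$2$5 = \<omega>^2" "H$2$0 = \<omega>^2"
    and k: "k \<noteq> 1" "k \<noteq> 2" and x: "H$k$2 \<noteq> -1"
  shows "(H$k$3 = \<omega>^2 \<and> H$k$4 = \<omega>^2 * H$k$2 \<or> H$k$3 = \<omega>^2 * H$k$2 \<and> H$k$4 = \<omega>^2) \<and>
         (H$k$5 = \<omega> \<and> H$k$0 = \<omega> * H$k$2 \<or> H$k$5 = \<omega> * H$k$2 \<and> H$k$0 = \<omega>)"
proof -
  define x where "x = H$k$2"
  define A where "A = 1 + x"
  define B where "B = H$k$3 + H$k$4"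
  define C where "C = H$k$5 + H$k$0"
  have hk1: "H$k$1 = 1" using d dephased_entries by blast
  have "(\<Sum>j\<in>UNIV. H$k$j * cnj (H$1$j)) = 0" using had_row[OF h, of k 1] k by simp
  then have e1: "A + B + C = 0" using d unfolding A_def B_def C_def x_def
    by (simp add: sum6 dephased_entries hk1 algebra_simps)
  have "(\<Sum>j\<in>UNIV. H$k$j * cnj (H$2$j)) = 0" using had_row[OF h, of k 2] k by simp
  then have e2: "A + \<omega>^2 * B + \<omega> * C = 0" unfolding A_def B_def C_def x_def
    by (simp add: sum6 r2 hk1 cnj_omega algebra_simps del: complex_cnj_power)
  have "(1 - \<omega>) * (A - \<omega> * B) = (A + \<omega>^2 * B + \<omega> * C) - \<omega> * (A + B + C)"
    by (simp add: algebra_simps power2_eq_square)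
  then have "(1 - \<omega>) * (A - \<omega> * B) = 0" using e1 e2 by simp
  then have AB: "A = \<omega> * B" using omega_ne1 by simp
  have "\<omega>^2 * A = (\<omega> * \<omega>^2) * B" using AB by (simp add: mult_ac)
  then have B: "B = \<omega>^2 * A" using omega4(3) by simp
  have C1: "C = -(A + B)" using e1 add_eq_0_iff by blast
  have o2: "1 + \<omega>^2 = -\<omega>" using omega_sum add_eq_0_iff by (metis add.commute add.left_commute)
  have "C = -((1 + \<omega>^2) * A)" using C1 B by (simp add: algebra_simps)
  then have C: "C = \<omega> * A" using o2 by simp
  have A0: "A \<noteq> 0" using x unfolding A_def x_def by (metis add_eq_0_iff)
  have ux: "cmod x = 1" using had_unit[OF h] unfolding x_def by blast
  have p1: "H$k$3 + H$k$4 = \<omega>^2 + \<omega>^2 * x" using B unfolding B_def A_def by (simp add: algebra_simps)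
  have p2: "H$k$5 + H$k$0 = \<omega> + \<omega> * x" using C unfolding C_def A_def by (simp add: algebra_simps)
  have onz: "\<omega> \<noteq> 0" using cmod_omega(1) by auto
  have nz1: "H$k$3 + H$k$4 \<noteq> 0" using B A0 onz unfolding B_def by simp
  have nz2: "H$k$5 + H$k$0 \<noteq> 0" using C A0 onz unfolding C_def by simp
  have q1: "cmod (\<omega>^2 * x) = 1" "cmod (\<omega> * x) = 1" using ux cmod_omega by (simp_all add: norm_mult)
  show ?thesis
    using pair_lemma[OF had_unit[OF h] had_unit[OF h] cmod_omega(2) q1(1) p1 nz1]
          pair_lemma[OF had_unit[OF h] had_unit[OF h] cmod_omega(1) q1(2) p2 nz2]
    unfolding x_def by blast
qed

lemma omega_more: "\<omega>^2 * \<omega> = 1" "\<omega>^2 * \<omega>^2 = \<omega>" "\<omega> * \<omega> = \<omega>^2" "\<omega> * \<omega>^2 = 1"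
  using omega4 by (simp_all add: mult.commute)

lemma row_opt: assumes "H$k$1 = 1" "x = \<omega> \<or> x = \<omega>^2" "H$k$2 = x"
  "(H$k$3 = \<omega>^2 \<and> H$k$4 = \<omega>^2 * x) \<or> (H$k$3 = \<omega>^2 * x \<and> H$k$4 = \<omega>^2)"
  "(H$k$5 = \<omega> \<and> H$k$0 = \<omega> * x) \<or> (H$k$5 = \<omega> * x \<and> H$k$0 = \<omega>)"
  shows "\<exists>n<8. \<forall>j. H$k$j = \<omega>^(opts!n!idx6 j)"
proof -
  have q0: ?thesis if "x = \<omega>" "H$k$3 = \<omega>^2 \<and> H$k$4 = \<omega>^2 * x" "H$k$5 = \<omega> \<and> H$k$0 = \<omega> * x"
    using that assms(1,3) by (intro exI[of _ 0]) (simp add: all6 idx6 opts_nth omega_more omega4(1))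
  have q1: ?thesis if "x = \<omega>" "H$k$3 = \<omega>^2 \<and> H$k$4 = \<omega>^2 * x" "H$k$5 = \<omega> * x \<and> H$k$0 = \<omega>"
    using that assms(1,3) by (intro exI[of _ 1]) (simp add: all6 idx6 opts_nth omega_more omega4(1))
  have q2: ?thesis if "x = \<omega>" "H$k$3 = \<omega>^2 * x \<and> H$k$4 = \<omega>^2" "H$k$5 = \<omega> \<and> H$k$0 = \<omega> * x"
    using that assms(1,3) by (intro exI[of _ 2]) (simp add: all6 idx6 opts_nth omega_more omega4(1))
  have q3: ?thesis if "x = \<omega>" "H$k$3 = \<omega>^2 * x \<and> H$k$4 = \<omega>^2" "H$k$5 = \<omega> * x \<and> H$k$0 = \<omega>"
    using that assms(1,3) by (intro exI[of _ 3]) (simp add: all6 idx6 opts_nth omega_more omega4(1))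
  have q4: ?thesis if "x = \<omega>^2" "H$k$3 = \<omega>^2 \<and> H$k$4 = \<omega>^2 * x" "H$k$5 = \<omega> \<and> H$k$0 = \<omega> * x"
    using that assms(1,3) by (intro exI[of _ 4]) (simp add: all6 idx6 opts_nth omega_more omega4(1))
  have q5: ?thesis if "x = \<omega>^2" "H$k$3 = \<omega>^2 \<and> H$k$4 = \<omega>^2 * x" "H$k$5 = \<omega> * x \<and> H$k$0 = \<omega>"
    using that assms(1,3) by (intro exI[of _ 5]) (simp add: all6 idx6 opts_nth omega_more omega4(1))
  have q6: ?thesis if "x = \<omega>^2" "H$k$3 = \<omega>^2 * x \<and> H$k$4 = \<omega>^2" "H$k$5 = \<omega> \<and> H$k$0 = \<omega> * x"
    using that assms(1,3) by (intro exI[of _ 6]) (simp add: all6 idx6 opts_nth omega_more omega4(1))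
  have q7: ?thesis if "x = \<omega>^2" "H$k$3 = \<omega>^2 * x \<and> H$k$4 = \<omega>^2" "H$k$5 = \<omega> * x \<and> H$k$0 = \<omega>"
    using that assms(1,3) by (intro exI[of _ 7]) (simp add: all6 idx6 opts_nth omega_more omega4(1))
  show ?thesis using assms(2,4,5) by (elim disjE) (rule q0 q1 q2 q3 q4 q5 q6 q7; assumption)+
qed

definition good :: "complex^6^6 \<Rightarrow> bool" where
  "good H \<longleftrightarrow> eqv H S6_0 \<or> (\<exists>K. complex_hadamard K \<and> dephased K \<and> eqv H K \<and> (\<exists>i j. i \<noteq> 1 \<and> j \<noteq> 1 \<and> K$i$j = -1))"

lemma lall8: "list_all P [0..<8] \<Longrightarrow> p < 8 \<Longrightarrow> P p"
  by (simp add: list_all_iff)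

lemma norm_good:
  assumes h: "complex_hadamard (H::complex^6^6)" and d: "dephased H"
    and r2: "H$2$1 = 1" "H$2$2 = 1" "H$2$3 = \<omega>" "H$2$4 = \<omega>" "H$2$5 = \<omega>^2" "H$2$0 = \<omega>^2"
  shows "good H"
proof (cases "\<exists>k. H$k$2 = -1")
  case True
  then obtain k where k: "H$k$2 = -1" by blast
  have "k \<noteq> 1" using k d dephased_entries by force
  moreover have "(2::6) \<noteq> 1" by simp
  ultimately show ?thesis unfolding good_def using h d k eqv_refl by blast
next
  case False
  have rs: "(H$k$3 = \<omega>^2 \<and> H$k$4 = \<omega>^2 * H$k$2 \<or> H$k$3 = \<omega>^2 * H$k$2 \<and> H$k$4 = \<omega>^2) \<and>
         (H$k$5 = \<omega> \<and> H$k$0 = \<omega> * H$k$2 \<or> H$k$5 = \<omega> * H$k$2 \<and> H$k$0 = \<omega>)"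
    if "k \<noteq> 1" "k \<noteq> 2" for k
    using row_struct[OF h d r2 that] False by blast
  note rs3 = rs[of 3, simplified] and rs4 = rs[of 4, simplified] and rs5 = rs[of 5, simplified] and rs0 = rs[of 0, simplified]
  have u: "cmod (H$k$j) = 1" for k j using had_unit[OF h] .
  have hk1: "H$k$1 = 1" for k using d dephased_entries by blast
  have h1j: "H$1$j = 1" for j using d dephased_entries by blast
  have "(\<Sum>k\<in>UNIV. H$k$2 * cnj (H$k$1)) = 0" using had_col[OF h, of 2 1] by simp
  then have s: "H$3$2 + H$4$2 + H$5$2 + H$0$2 = -2"
    by (simp add: sum6 hk1 h1j r2 algebra_simps eq_neg_iff_add_eq_0)
  have "(\<Sum>k\<in>UNIV. H$k$3 * cnj (H$k$1)) = 0" using had_col[OF h, of 3 1] by simp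
  then have eq: "H$0$3 + 1 + \<omega> + H$3$3 + H$4$3 + H$5$3 = 0"
    by (simp add: sum6 hk1 h1j r2 algebra_simps)
  have "H$0$3 + H$3$3 + H$4$3 + H$5$3 = (H$0$3 + 1 + \<omega> + H$3$3 + H$4$3 + H$5$3) - 1 - \<omega>"
    by (simp add: algebra_simps)
  also have "\<dots> = - 1 - \<omega>" by (subst eq) simp
  finally have "\<omega> * (H$0$3 + H$3$3 + H$4$3 + H$5$3) = \<omega> * (- 1 - \<omega>)" by simp
  also have "\<omega> * (- 1 - \<omega>) = 1" using omega_sum omega4 by algebra
  finally have e: "\<omega> * H$3$3 + \<omega> * H$4$3 + \<omega> * H$5$3 + \<omega> * H$0$3 = 1" by (simp add: algebra_simps)
  have cc: "\<omega> * H$k$3 = 1 \<or> \<omega> * H$k$3 = H$k$2" if "H$k$3 = \<omega>^2 \<or> H$k$3 = \<omega>^2 * H$k$2" for k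
    using that omega_more by (auto simp: mult.assoc[symmetric])
  have x: "(H$3$2 = \<omega> \<or> H$3$2 = \<omega>^2) \<and> (H$4$2 = \<omega> \<or> H$4$2 = \<omega>^2) \<and> (H$5$2 = \<omega> \<or> H$5$2 = \<omega>^2) \<and> (H$0$2 = \<omega> \<or> H$0$2 = \<omega>^2)"
    apply (rule four[OF u u u u s _ _ _ _ e])
    using cc rs3 rs4 rs5 rs0 by blast+
  obtain a where a: "a < 8" "\<forall>j. H$3$j = \<omega>^(opts!a!idx6 j)" using row_opt[OF hk1 _ refl] x rs3 by blast
  obtain b where b: "b < 8" "\<forall>j. H$4$j = \<omega>^(opts!b!idx6 j)" using row_opt[OF hk1 _ refl] x rs4 by blast
  obtain c where c: "c < 8" "\<forall>j. H$5$j = \<omega>^(opts!c!idx6 j)" using row_opt[OF hk1 _ refl] x rs5 by blast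
  obtain e where e: "e < 8" "\<forall>j. H$0$j = \<omega>^(opts!e!idx6 j)" using row_opt[OF hk1 _ refl] x rs0 by blast
  have BT: "BT!p!q" if "p < 8" "q < 8" "bal (opts!p) (opts!q)" for p q
    using lall8[OF lall8[OF baltab that(1)] that(2)] that(3) by simp
  have ab: "BT!a!b" using BT[OF a(1) b(1) orth_bal[OF h _ a(2) b(2)]] by simp
  have ac: "BT!a!c" using BT[OF a(1) c(1) orth_bal[OF h _ a(2) c(2)]] by simp
  have ae: "BT!a!e" using BT[OF a(1) e(1) orth_bal[OF h _ a(2) e(2)]] by simp
  have bc: "BT!b!c" using BT[OF b(1) c(1) orth_bal[OF h _ b(2) c(2)]] by simp
  have be: "BT!b!e" using BT[OF b(1) e(1) orth_bal[OF h _ b(2) e(2)]] by simp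
  have ce: "BT!c!e" using BT[OF c(1) e(1) orth_bal[OF h _ c(2) e(2)]] by simp
  note f2 = lall8[OF lall8[OF fin_enum a(1)] b(1), unfolded if_P[OF ab]]
  note f3 = lall8[OF f2 c(1), unfolded if_P[OF conjI[OF ac bc]]]
  note f4 = lall8[OF f3 e(1), unfolded if_P[OF conjI[OF ae conjI[OF be ce]]]]
  have "(a,b,c,e) \<in> set (map fst WT)" by (rule f4)
  then obtain w where w: "((a,b,c,e),w) \<in> set WT" by auto
  define M where "M = [R0, R1, opts!a, opts!b, opts!c, opts!e]"
  have wok: "wok M w" using fin_wok w unfolding M_def list_all_iff by fastforce
  have R0: "\<forall>j. H$1$j = \<omega>^(R0!idx6 j)" unfolding all6 by (simp add: R0_def idx6 h1j)
  have R1: "\<forall>j. H$2$j = \<omega>^(R1!idx6 j)" unfolding all6 by (simp add: R1_def idx6 r2)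
  have "\<forall>i j. H$i$j = \<omega>^(M!idx6 i!idx6 j)"
  proof
    fix i
    show "\<forall>j. H$i$j = \<omega>^(M!idx6 i!idx6 j)"
      using all6[of "\<lambda>i. \<forall>j. H$i$j = \<omega>^(M!idx6 i!idx6 j)"] R0 R1 a(2) b(2) c(2) e(2) by (simp add: M_def idx6)
  qed
  then have "eqv H S6_0" using wok_eqv[OF wok] by blast
  then show ?thesis unfolding good_def by blast
qed



lemma good_trans: assumes "eqv H H'" "good H'" shows "good H"
  using assms eqv_trans unfolding good_def by blast

lemma sum_if_const: "(\<Sum>j\<in>(UNIV::6 set). if P j then c else 0) = of_nat (card {j. P j}) * (c::complex)"
proof -
  have "(\<Sum>j\<in>(UNIV::6 set). if P j then c else 0) = (\<Sum>j\<in>{j\<in>UNIV. P j}. c)"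
    by (rule sum.inter_filter[symmetric]) simp
  then show ?thesis by simp
qed

lemma perm_hadamard:
  fixes \<sigma> \<tau> :: "6 \<Rightarrow> 6"
  assumes h: "complex_hadamard (H::complex^6^6)" and s: "bij \<sigma>" and t: "bij \<tau>"
  shows "complex_hadamard (\<chi> a b. H$(\<sigma> a)$(\<tau> b))"
proof (rule had_intro)
  fix i j show "cmod ((\<chi> a b. H$(\<sigma> a)$(\<tau> b)) $ i $ j) = 1" using had_unit[OF h] by simp
next
  fix a b
  have "(\<Sum>j\<in>UNIV. H$(\<sigma> a)$(\<tau> j) * cnj (H$(\<sigma> b)$(\<tau> j))) = (\<Sum>j\<in>UNIV. H$(\<sigma> a)$j * cnj (H$(\<sigma> b)$j))"
    using sum.reindex_bij_betw[of \<tau> UNIV UNIV "\<lambda>j. H$(\<sigma> a)$j * cnj (H$(\<sigma> b)$j)"] t by simp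
  also have "\<dots> = (if a = b then 6 else 0)" using had_row[OF h] s by (simp add: bij_is_inj inj_eq)
  finally show "(\<Sum>j\<in>UNIV. (\<chi> a b. H$(\<sigma> a)$(\<tau> b)) $ a $ j * cnj ((\<chi> a b. H$(\<sigma> a)$(\<tau> b)) $ b $ j)) = (if a = b then 6 else 0)"
    by simp
qed

lemma perm_eqv: fixes \<sigma> \<tau> :: "'n::finite \<Rightarrow> 'n" assumes "bij \<sigma>" "bij \<tau>" shows "eqv H (\<chi> a b. H$(\<sigma> a)$(\<tau> b))"
  unfolding eqv_def using assms
  by (intro exI[of _ \<sigma>] exI[of _ \<tau>] exI[of _ "\<lambda>_. 1"] exI[of _ "\<lambda>_. 1"]) simp

lemma inj6_bij: "inj (f::6 \<Rightarrow> 6) \<Longrightarrow> bij f"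
  by (simp add: bij_def finite_UNIV_inj_surj)

lemma row_case:
  assumes h: "complex_hadamard (H::complex^6^6)" and d: "dephased H" and i: "i \<noteq> 1"
    and cr: "\<forall>j. (H$i$j)^3 = 1"
  shows "good H"
proof -
  define A0 where "A0 = {j. H$i$j = 1}"
  define A1 where "A1 = {j. H$i$j = \<omega>}"
  define A2 where "A2 = {j. H$i$j = \<omega>^2}"
  have v: "H$i$j = 1 \<or> H$i$j = \<omega> \<or> H$i$j = \<omega>^2" for j using cube_root cr by blast
  have pt: "H$i$j = (if H$i$j = 1 then 1 else 0) + (if H$i$j = \<omega> then \<omega> else 0) + (if H$i$j = \<omega>^2 then \<omega>^2 else 0)" for j
    using v[of j] omega_ne1 by auto
  have "(\<Sum>j\<in>UNIV. H$i$j * cnj (H$1$j)) = 0" using had_row[OF h, of i 1] i by simp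
  then have "(\<Sum>j\<in>UNIV. H$i$j) = 0" using d by (simp add: dephased_def)
  then have "(\<Sum>j\<in>UNIV. (if H$i$j = 1 then 1 else 0) + (if H$i$j = \<omega> then \<omega> else 0) + (if H$i$j = \<omega>^2 then \<omega>^2 else 0)) = 0"
    using pt by (metis (no_types, lifting) sum.cong)
  then have "of_nat (card A0) + of_nat (card A1) * \<omega> + of_nat (card A2) * \<omega>^2 = (0::complex)"
    unfolding A0_def A1_def A2_def by (simp add: sum.distrib sum_if_const)
  then have eqc: "card A0 = card A1" "card A1 = card A2" using zero3 by blast+
  have "UNIV = A0 \<union> (A1 \<union> A2)" using v unfolding A0_def A1_def A2_def by auto
  moreover have "A0 \<inter> (A1 \<union> A2) = {}" "A1 \<inter> A2 = {}" using omega_ne1 unfolding A0_def A1_def A2_def by auto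
  ultimately have "card (UNIV::6 set) = card A0 + (card A1 + card A2)"
    by (metis card_Un_disjoint finite finite_Un)
  then have c2: "card A0 = 2" "card A1 = 2" "card A2 = 2" using eqc by simp_all
  have 1: "1 \<in> A0" using d unfolding A0_def dephased_def by simp
  obtain c where c: "c \<noteq> 1" "H$i$c = 1"
  proof -
    obtain x y where xy: "A0 = {x, y}" "x \<noteq> y" using card_2_iff[THEN iffD1, OF c2(1)] by blast
    have "x \<in> A0" "y \<in> A0" unfolding xy(1) by simp_all
    then have hx: "H$i$x = 1" "H$i$y = 1" unfolding A0_def by auto
    have "1 = x \<or> 1 = y" using 1 xy(1) by auto
    then show ?thesis
    proof
      assume "1 = x" then show ?thesis using that[of y] xy(2) hx by blast
    next
      assume "1 = y" then show ?thesis using that[of x] xy(2) hx by blast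
    qed
  qed
  obtain p p' where p: "p \<noteq> p'" "H$i$p = \<omega>" "H$i$p' = \<omega>"
  proof -
    obtain x y where xy: "A1 = {x, y}" "x \<noteq> y" using card_2_iff[THEN iffD1, OF c2(2)] by blast
    have "x \<in> A1" "y \<in> A1" unfolding xy(1) by simp_all
    then have "H$i$x = \<omega>" "H$i$y = \<omega>" unfolding A1_def by auto
    then show ?thesis using that xy(2) by blast
  qed
  obtain q q' where q: "q \<noteq> q'" "H$i$q = \<omega>^2" "H$i$q' = \<omega>^2"
  proof -
    obtain x y where xy: "A2 = {x, y}" "x \<noteq> y" using card_2_iff[THEN iffD1, OF c2(3)] by blast
    have "x \<in> A2" "y \<in> A2" unfolding xy(1) by simp_all
    then have "H$i$x = \<omega>^2" "H$i$y = \<omega>^2" unfolding A2_def by auto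
    then show ?thesis using that xy(2) by blast
  qed
  have h1: "H$i$1 = 1" using d unfolding dephased_def by simp
  have dist: "c \<noteq> p" "c \<noteq> p'" "c \<noteq> q" "c \<noteq> q'" "p \<noteq> q" "p \<noteq> q'" "p' \<noteq> q" "p' \<noteq> q'"
     "p \<noteq> 1" "p' \<noteq> 1" "q \<noteq> 1" "q' \<noteq> 1"
    using c p q h1 omega_ne1 by (metis)+
  define \<tau> where "\<tau> j = (if j = 1 then 1 else if j = 2 then c else if j = 3 then p else if j = 4 then p' else if j = 5 then q else q')" for j :: 6
  define \<sigma> where "\<sigma> j = (if j = 2 then i else if j = i then 2 else j)" for j :: 6
  have t1: "\<tau> 1 = 1" "\<tau> 2 = c" "\<tau> 3 = p" "\<tau> 4 = p'" "\<tau> 5 = q" "\<tau> 0 = q'" unfolding \<tau>_def by simp_all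
  have "\<forall>j j'. \<tau> j = \<tau> j' \<longrightarrow> j = j'"
    unfolding all6 t1 using dist dist[THEN not_sym] c(1) p(1) q(1) c(1)[THEN not_sym] p(1)[THEN not_sym] q(1)[THEN not_sym] by simp
  then have bt: "bij \<tau>" by (intro inj6_bij injI) blast
  have bs: "bij \<sigma>" by (intro inj6_bij injI) (auto simp: \<sigma>_def split: if_splits)
  have s1: "\<sigma> 1 = 1" "\<sigma> 2 = i" unfolding \<sigma>_def using i by auto
  define H' where "H' = (\<chi> a b. H$(\<sigma> a)$(\<tau> b))"
  have e: "eqv H H'" unfolding H'_def by (rule perm_eqv[OF bs bt])
  have h': "complex_hadamard H'" unfolding H'_def by (rule perm_hadamard[OF h bs bt])
  have d': "dephased H'" using d s1(1) t1(1) unfolding H'_def dephased_def by simp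
  have "good H'"
    by (rule norm_good[OF h' d']) (simp_all add: H'_def s1 t1 h1 c p q)
  then show ?thesis using good_trans e by blast
qed

lemma transpose_hadamard: assumes h: "complex_hadamard (H::complex^6^6)" shows "complex_hadamard (transpose H)"
  by (rule had_intro) (simp_all add: transpose_def had_unit[OF h] had_col[OF h])

lemma eqv_transpose: assumes "eqv A B" shows "eqv (transpose A) (transpose B)"
proof -
  obtain \<sigma> \<tau> a b where s: "bij \<sigma>" and t: "bij \<tau>" and a: "\<forall>i. cmod (a i) = 1" and b: "\<forall>j. cmod (b j) = 1"
    and K: "\<forall>i j. B $ i $ j = a i * A $ (\<sigma> i) $ (\<tau> j) * b j"
    using assms unfolding eqv_def by blast
  show ?thesis unfolding eqv_def
    apply (rule exI[of _ \<tau>], rule exI[of _ \<sigma>], rule exI[of _ b], rule exI[of _ a])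
    using s t a b K by (simp add: transpose_def mult_ac)
qed

lemma S6_sym: "transpose S6_0 = S6_0"
proof -
  have "\<forall>i j. S6_0_list!idx6 i!idx6 j = S6_0_list!idx6 j!idx6 i"
    unfolding all6 by (simp add: idx6 S6_0_list_def)
  then show ?thesis by (simp add: vec_eq_iff transpose_def S6_0_def)
qed

lemma good_transpose: assumes "good (transpose H)" shows "good H"
proof -
  { assume "eqv (transpose H) S6_0"
    then have "eqv H S6_0" using eqv_transpose S6_sym by fastforce
    then have ?thesis unfolding good_def by blast }
  moreover
  { fix K i j assume K: "complex_hadamard K" "dephased K" "eqv (transpose H) K" "i \<noteq> 1" "j \<noteq> 1" "K$i$j = -1"
    have "complex_hadamard (transpose K)" by (rule transpose_hadamard[OF K(1)])
    moreover have "dephased (transpose K)" using K(2) unfolding dephased_def transpose_def by simp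
    moreover have "eqv H (transpose K)" using eqv_transpose[OF K(3)] by simp
    moreover have "transpose K $ j $ i = -1" using K(6) by (simp add: transpose_def)
    ultimately have ?thesis unfolding good_def using K(4,5) by blast }
  ultimately show ?thesis using assms unfolding good_def by blast
qed

theorem lemma2p25:
  fixes H :: "complex^6^6"
  assumes "complex_hadamard H" and "dephased H"
    and "(\<exists>i. i \<noteq> 1 \<and> (\<forall>j. (H $ i $ j) ^ 3 = 1)) \<or> (\<exists>j. j \<noteq> 1 \<and> (\<forall>i. (H $ i $ j) ^ 3 = 1))"
  shows "hadamard_equiv H S6_0 \<or> in_K6_3 H"
proof -
  have "good H"
    using assms(3)
  proof
    assume "\<exists>i. i \<noteq> 1 \<and> (\<forall>j. (H $ i $ j) ^ 3 = 1)"
    then show "good H" using row_case[OF assms(1,2)] by blast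
  next
    assume "\<exists>j. j \<noteq> 1 \<and> (\<forall>i. (H $ i $ j) ^ 3 = 1)"
    then obtain j where j: "j \<noteq> 1" "\<forall>i. (transpose H $ j $ i) ^ 3 = 1" by (auto simp: transpose_def)
    have "dephased (transpose H)" using assms(2) unfolding dephased_def transpose_def by simp
    then have "good (transpose H)" using row_case[OF transpose_hadamard[OF assms(1)] _ j] by blast
    then show "good H" by (rule good_transpose)
  qed
  then show ?thesis unfolding good_def in_K6_3_def using eqv_hadamard_equiv by blast
qed

end
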